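(* Let $V\subseteq B(H)\otimes N$ be a quantum multigraph on a pair $(M,N)$ with $N$ minimally represented on $K$, let $\mathcal{P}_V\in M\otimes M^{op}\otimes N\otimes N^{op}$ be its quantum multi-edge indicator, and let $\tilde V=(\mathrm{id}\otimes\mathrm{tr}_K)(V)\subseteq B(H)$ be the underlying quantum single-edged graph. Define $$\mathcal{S}_V=(\mathrm{id}\otimes\mathrm{id}\otimes\mathrm{tr}_K)(\mathrm{id}\otimes\mathrm{id}\otimes m)(\mathcal{P}_V)\in M\otimes M^{op},$$ where $m:N\otimes N^{op}\to N$, $m(a\otimes b)=ab$, is the multiplication of $N$. Then $\mathcal{S}_V$ is a positive element of $M\otimes M^{op}$, and under the Weaver action of $M\otimes M^{op}$ on $B(H)$ the range of $\pi(\mathcal{S}_V)$ is $\tilde V$.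
   Context: All Hilbert spaces are finite dimensional. $M\subseteq B(H)$, $N\subseteq B(K)$ are finite-dimensional von Neumann algebras; $N$ is minimally represented, meaning $N'=Z(N)$ (commutant equals center). $A^{op}$ denotes the opposite algebra. A quantum multi-relation (multigraph) on $(M,N)$ is a subspace $V\subseteq B(H\otimes K)$ with $V\subseteq B(H)\otimes N$, $V$ an $(M'\otimes1)$–$(M'\otimes1)$ bimodule, and $(1\otimes Z(N))V\subseteq V$. The Weaver action of $M\otimes M^{op}$ on $B(H)$ is $\pi(T_1\otimes T_2)(S)=T_1ST_2$, and that of $M\otimes M^{op}\otimes N\otimes N^{op}$ on $B(H)\otimes B(K)=B(H\otimes K)$ is $\pi(T_1\otimes T_2\otimes T_3\otimes T_4)(S_1\otimes S_2)=T_1S_1T_2\otimes T_3S_2T_4$. $B(H\otimes K)$ carries the Hilbert–Schmidt inner product from $\mathrm{tr}_H\otimes\mathrm{tr}_K$. The quantum multi-edge indicator of $V$ is $\mathcal{P}_V=1-\tilde{\mathcal{P}}_V$, where $\tilde{\mathcal{P}}_V$ is the generator (a projection) of the annihilator ideal $\{\mathcal{B}\in M\otimes M^{op}\otimes N\otimes N^{op}:\pi(\mathcal{B})(T)=0\ \forall T\in V\}$; equivalently $\mathcal{P}_V$ is the projection in $M\otimes M^{op}\otimes N\otimes N^{op}$ such that $\pi(\mathcal{P}_V)$ is the orthogonal projection of $B(H\otimes K)$ onto $V$. $\mathrm{tr}_K$ is the trace on $B(K)$ and $\mathrm{id}\otimes\mathrm{tr}_K$ the partial trace. *)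

theory Defs
  imports "HOL-Analysis.Analysis"
begin

text \<open>H = complex^'h, K = complex^'k for finite
  index types 'h, 'k; B(H) is the type of complex matrices complex^'h^'h, and
  B(H tensor K) = complex^('h*'k)^('h*'k) with row/column index pairs (i,alpha).\<close>

type_synonym 'n cmat = "complex^'n^'n"

definition cadj :: "'n::finite cmat \<Rightarrow> 'n cmat" where
  "cadj A = (\<chi> i j. cnj (A $ j $ i))"

definition csm :: "complex \<Rightarrow> 'n::finite cmat \<Rightarrow> 'n cmat" where
  "csm c A = (\<chi> i j. c * A $ i $ j)"

definition ctrace :: "'n::finite cmat \<Rightarrow> complex" where
  "ctrace A = (\<Sum>i\<in>UNIV. A $ i $ i)"

definition hs_inner :: "'n::finite cmat \<Rightarrow> 'n cmat \<Rightarrow> complex" where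
  "hs_inner A B = ctrace (cadj A ** B)"

definition lin_span :: "'n::finite cmat set \<Rightarrow> 'n cmat set" where
  "lin_span X = {Y. \<exists>F c. finite F \<and> F \<subseteq> X \<and> Y = (\<Sum>A\<in>F. csm (c A) A)}"

definition csubspace :: "'n::finite cmat set \<Rightarrow> bool" where
  "csubspace V \<longleftrightarrow> 0 \<in> V \<and> (\<forall>A\<in>V. \<forall>B\<in>V. A + B \<in> V) \<and> (\<forall>c. \<forall>A\<in>V. csm c A \<in> V)"

definition vN_algebra :: "'n::finite cmat set \<Rightarrow> bool" where
  "vN_algebra M \<longleftrightarrow> csubspace M \<and> mat 1 \<in> M \<and>
     (\<forall>A\<in>M. \<forall>B\<in>M. A ** B \<in> M) \<and> (\<forall>A\<in>M. cadj A \<in> M)"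

definition commutant :: "'n::finite cmat set \<Rightarrow> 'n cmat set" where
  "commutant S = {B. \<forall>A\<in>S. A ** B = B ** A}"

definition center :: "'n::finite cmat set \<Rightarrow> 'n cmat set" where
  "center N = N \<inter> commutant N"

definition minimally_represented :: "'n::finite cmat set \<Rightarrow> bool" where
  "minimally_represented N \<longleftrightarrow> commutant N = center N"

definition kron :: "'a::finite cmat \<Rightarrow> 'b::finite cmat \<Rightarrow> ('a \<times> 'b) cmat" where
  "kron A B = (\<chi> x y. A $ fst x $ fst y * B $ snd x $ snd y)"

definition BH_tensor :: "'k::finite cmat set \<Rightarrow> ('h::finite \<times> 'k) cmat set" where
  "BH_tensor N = lin_span {kron S b | S b. b \<in> N}"

definition quantum_multigraph ::
  "'h::finite cmat set \<Rightarrow> 'k::finite cmat set \<Rightarrow> ('h \<times> 'k) cmat set \<Rightarrow> bool" where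
  "quantum_multigraph M N V \<longleftrightarrow> csubspace V \<and> V \<subseteq> BH_tensor N \<and>
     (\<forall>a\<in>commutant M. \<forall>T\<in>V. kron a (mat 1) ** T \<in> V \<and> T ** kron a (mat 1) \<in> V) \<and>
     (\<forall>z\<in>center N. \<forall>T\<in>V. kron (mat 1) z ** T \<in> V)"

text \<open>Concrete faithful realisation of the opposite algebra via transposition:
  an elementary tensor  a tensor b^op  of M tensor M^op is realised as the matrix
  on H tensor H with entries ((i,j),(p,q)) |-> a_ip * b_qj  (i.e. a tensor b^T).
  This is a *-isomorphism of the algebraic tensor product onto its image
  (products: (a tensor b^op)(a' tensor b'^op) = aa' tensor (b'b)^op).\<close>
definition el2 :: "'h::finite cmat \<Rightarrow> 'h cmat \<Rightarrow> ('h \<times> 'h) cmat" where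
  "el2 a b = (\<chi> x y. case (x, y) of ((i, j), (p, q)) \<Rightarrow> a $ i $ p * b $ q $ j)"

definition el4 :: "'h::finite cmat \<Rightarrow> 'h cmat \<Rightarrow> 'k::finite cmat \<Rightarrow> 'k cmat
    \<Rightarrow> ('h \<times> 'h \<times> 'k \<times> 'k) cmat" where
  "el4 a b c d = (\<chi> x y. case (x, y) of ((i, j, \<alpha>, \<beta>), (p, q, \<gamma>, \<delta>)) \<Rightarrow>
      a $ i $ p * b $ q $ j * c $ \<alpha> $ \<gamma> * d $ \<delta> $ \<beta>)"

definition MMop :: "'h::finite cmat set \<Rightarrow> ('h \<times> 'h) cmat set" where
  "MMop M = lin_span {el2 a b | a b. a \<in> M \<and> b \<in> M}"

definition MMopNNop :: "'h::finite cmat set \<Rightarrow> 'k::finite cmat set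
    \<Rightarrow> ('h \<times> 'h \<times> 'k \<times> 'k) cmat set" where
  "MMopNNop M N = lin_span {el4 a b c d | a b c d. a \<in> M \<and> b \<in> M \<and> c \<in> N \<and> d \<in> N}"

text \<open>Weaver actions (linear extensions of  a tensor b^op : S |-> a S b  and
  a tensor b^op tensor c tensor d^op : S1 tensor S2 |-> a S1 b tensor c S2 d).\<close>
definition weaver2 :: "('h::finite \<times> 'h) cmat \<Rightarrow> 'h cmat \<Rightarrow> 'h cmat" where
  "weaver2 X S = (\<chi> i j. \<Sum>p\<in>UNIV. \<Sum>q\<in>UNIV. X $ (i, j) $ (p, q) * S $ p $ q)"

definition weaver4 :: "('h::finite \<times> 'h \<times> 'k::finite \<times> 'k) cmat
    \<Rightarrow> ('h \<times> 'k) cmat \<Rightarrow> ('h \<times> 'k) cmat" where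
  "weaver4 X S = (\<chi> x y. \<Sum>p\<in>UNIV. \<Sum>q\<in>UNIV. \<Sum>\<gamma>\<in>UNIV. \<Sum>\<delta>\<in>UNIV.
      X $ (fst x, fst y, snd x, snd y) $ (p, q, \<gamma>, \<delta>) * S $ (p, \<gamma>) $ (q, \<delta>))"

definition multi_edge_indicator :: "'h::finite cmat set \<Rightarrow> 'k::finite cmat set
    \<Rightarrow> ('h \<times> 'k) cmat set \<Rightarrow> ('h \<times> 'h \<times> 'k \<times> 'k) cmat \<Rightarrow> bool" where
  "multi_edge_indicator M N V P \<longleftrightarrow> P \<in> MMopNNop M N \<and> P ** P = P \<and> cadj P = P \<and>
     (\<forall>S. weaver4 P S \<in> V \<and> (\<forall>T\<in>V. hs_inner T (S - weaver4 P S) = 0))"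

definition ptrace_K :: "('h::finite \<times> 'k::finite) cmat \<Rightarrow> 'h cmat" where
  "ptrace_K T = (\<chi> i j. \<Sum>\<alpha>\<in>UNIV. T $ (i, \<alpha>) $ (j, \<alpha>))"

text \<open>id tensor id tensor m, where m(c tensor d^op) = c d, realised on the concrete
  representation (3-fold elements a tensor b^op tensor c have entries a_ip b_qj c_{alpha beta}).\<close>
definition idid_mult :: "('h::finite \<times> 'h \<times> 'k::finite \<times> 'k) cmat \<Rightarrow> ('h \<times> 'h \<times> 'k) cmat" where
  "idid_mult X = (\<chi> x y. case (x, y) of ((i, j, \<alpha>), (p, q, \<beta>)) \<Rightarrow>
      \<Sum>\<gamma>\<in>UNIV. X $ (i, j, \<alpha>, \<beta>) $ (p, q, \<gamma>, \<gamma>))"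

definition idid_trace :: "('h::finite \<times> 'h \<times> 'k::finite) cmat \<Rightarrow> ('h \<times> 'h) cmat" where
  "idid_trace Y = (\<chi> x y. case (x, y) of ((i, j), (p, q)) \<Rightarrow>
      \<Sum>\<alpha>\<in>UNIV. Y $ (i, j, \<alpha>) $ (p, q, \<alpha>))"

definition positive_in :: "'n::finite cmat set \<Rightarrow> 'n cmat \<Rightarrow> bool" where
  "positive_in A X \<longleftrightarrow> X \<in> A \<and> (\<exists>C\<in>A. X = cadj C ** C)"

end

theory Submission
  imports Defs "HOL-Computational_Algebra.Fundamental_Theorem_Algebra"
begin


definition radj :: "complex^'n^'m \<Rightarrow> complex^'m^'n" where
  "radj A = (\<chi> i j. cnj (A $ j $ i))"

lemma cadj_radj: "cadj A = radj A"
  by (simp add: cadj_def radj_def)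

lemma radj_radj[simp]: "radj (radj A) = A"
  by (simp add: radj_def vec_eq_iff)

lemma radj_mult: "radj (A ** B) = radj B ** radj A"
  by (simp add: radj_def matrix_matrix_mult_def vec_eq_iff cnj_sum mult.commute)

lemma radj_add: "radj (A + B) = radj A + radj B"
  by (simp add: radj_def vec_eq_iff)

lemma radj_diff: "radj (A - B) = radj A - radj B"
  by (simp add: radj_def vec_eq_iff)

lemma radj_csm: "radj (csm c A) = csm (cnj c) (radj A)"
  by (simp add: radj_def csm_def vec_eq_iff)

lemma radj_one: "radj (mat 1 :: complex^'n^'n) = mat 1"
  by (simp add: radj_def mat_def vec_eq_iff)

lemma radj_sum: "radj (sum f S) = (\<Sum>x\<in>S. radj (f x))"
  by (simp add: radj_def vec_eq_iff cnj_sum)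

definition cdot :: "complex^'n \<Rightarrow> complex^'n \<Rightarrow> complex" where
  "cdot u v = (\<Sum>i\<in>UNIV. cnj (u $ i) * v $ i)"

lemma cdot_adj: "cdot u (A *v w) = cdot (radj A *v u) w"
proof -
  have "cdot u (A *v w) = (\<Sum>i\<in>UNIV. \<Sum>j\<in>UNIV. cnj (u $ i) * A $ i $ j * w $ j)"
    by (simp add: cdot_def matrix_vector_mult_def sum_distrib_left mult.assoc)
  also have "\<dots> = (\<Sum>j\<in>UNIV. \<Sum>i\<in>UNIV. cnj (u $ i) * A $ i $ j * w $ j)"
    by (rule sum.swap)
  also have "\<dots> = cdot (radj A *v u) w"
    by (simp add: cdot_def matrix_vector_mult_def radj_def cnj_sum sum_distrib_left sum_distrib_right ac_simps)
  finally show ?thesis .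
qed

definition nsq :: "complex^'n \<Rightarrow> real" where
  "nsq u = (\<Sum>i\<in>UNIV. (cmod (u $ i))\<^sup>2)"

lemma cdot_self: "cdot u u = complex_of_real (nsq u)"
proof -
  have "cnj (u $ i) * u $ i = complex_of_real ((cmod (u $ i))\<^sup>2)" for i
    by (metis complex_norm_square mult.commute of_real_power)
  then show ?thesis by (simp add: cdot_def nsq_def)
qed

lemma nsq_nonneg: "nsq u \<ge> 0"
  by (simp add: nsq_def sum_nonneg)

lemma nsq_zero: "nsq u = 0 \<Longrightarrow> u = 0"
  unfolding nsq_def
  by (subst (asm) sum_nonneg_eq_0_iff) (auto simp: vec_eq_iff)

lemma cdot_self_zero: "cdot u u = 0 \<Longrightarrow> u = 0"
  using cdot_self nsq_zero by (metis of_real_eq_0_iff)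

lemma csm_add_left: "csm (a + b) A = csm a A + csm b A"
  by (simp add: csm_def vec_eq_iff distrib_right)
lemma csm_add_right: "csm a (A + B) = csm a A + csm a B"
  by (simp add: csm_def vec_eq_iff distrib_left)
lemma csm_csm: "csm a (csm b A) = csm (a * b) A"
  by (simp add: csm_def vec_eq_iff mult.assoc)
lemma csm_zero[simp]: "csm 0 A = 0" "csm a 0 = 0"
  by (simp_all add: csm_def vec_eq_iff)
lemma csm_one[simp]: "csm 1 A = A"
  by (simp add: csm_def vec_eq_iff)
lemma csm_mult_left: "csm c A ** B = csm c (A ** B)"
  by (simp add: csm_def matrix_matrix_mult_def vec_eq_iff sum_distrib_left mult.assoc)
lemma csm_mult_right: "A ** csm c B = csm c (A ** B)"
  by (simp add: csm_def matrix_matrix_mult_def vec_eq_iff sum_distrib_left mult.left_commute)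
lemma csm_sum: "csm c (sum f S) = (\<Sum>x\<in>S. csm c (f x))"
  by (induction S rule: infinite_finite_induct) (auto simp: csm_add_right)
lemma sum_csm: "csm (sum f S) A = (\<Sum>x\<in>S. csm (f x) A)"
  by (induction S rule: infinite_finite_induct) (auto simp: csm_add_left)
lemma csm_minus1: "csm (-1) A = - A"
  by (simp add: csm_def vec_eq_iff)

lemma mult_sum_right: "(A::'a::semiring_1^'n^'m) ** sum f S = (\<Sum>x\<in>S. A ** f x)"
  by (induction S rule: infinite_finite_induct) (auto simp: matrix_add_ldistrib)
lemma matrix_add_rdistrib: "((A + B) ** C) = (A ** C) + (B ** C)"
  by (vector matrix_matrix_mult_def sum.distrib[symmetric] field_simps)
lemma mult_sum_left: "sum f S ** (A::'a::semiring_1^'n^'m) = (\<Sum>x\<in>S. f x ** A)"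
  by (induction S rule: infinite_finite_induct) (auto simp: matrix_add_rdistrib)


primrec mpow :: "'n::finite cmat \<Rightarrow> nat \<Rightarrow> 'n cmat" where
  "mpow X 0 = mat 1"
| "mpow X (Suc n) = X ** mpow X n"

lemma mpow_comm: "mpow X n ** X = X ** mpow X n"
  by (induction n) (simp_all add: matrix_mul_assoc[symmetric])

definition ev :: "'n::finite cmat \<Rightarrow> complex poly \<Rightarrow> 'n cmat" where
  "ev X p = (\<Sum>i\<le>degree p. csm (coeff p i) (mpow X i))"

lemma ev_bound:
  assumes "degree p < n"
  shows "ev X p = (\<Sum>i<n. csm (coeff p i) (mpow X i))"
proof -
  have "(\<Sum>i<n. csm (coeff p i) (mpow X i)) = (\<Sum>i\<le>degree p. csm (coeff p i) (mpow X i))"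
  proof (rule sum.mono_neutral_right)
    show "\<forall>i\<in>{..<n} - {..degree p}. csm (coeff p i) (mpow X i) = 0"
      by (auto simp: coeff_eq_0)
  qed (use assms in auto)
  then show ?thesis by (simp add: ev_def)
qed

lemma ev_add: "ev X (p + q) = ev X p + ev X q"
proof -
  define n where "n = Suc (max (degree p) (degree q))"
  have "degree (p + q) < n" "degree p < n" "degree q < n"
    using degree_add_le_max[of p q] by (simp_all add: n_def)
  then show ?thesis
    using ev_bound[where p=p and n=n and X=X] ev_bound[where p=q and n=n and X=X]
      ev_bound[where p="p+q" and n=n and X=X]
    by (simp add: csm_add_left sum.distrib)
qed

lemma ev_smult: "ev X (smult a p) = csm a (ev X p)"
proof -
  define n where "n = Suc (degree p)"
  have d: "degree (smult a p) < n" "degree p < n" by (simp_all add: n_def le_imp_less_Suc)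
  show ?thesis
    using ev_bound[where p=p and n=n and X=X, OF d(2)] ev_bound[where p="smult a p" and n=n and X=X, OF d(1)]
    by (simp add: csm_sum csm_csm)
qed

lemma ev_pCons: "ev X (pCons a p) = csm a (mat 1) + X ** ev X p"
proof -
  define n where "n = Suc (degree p)"
  have d: "degree (pCons a p) < Suc n" using degree_pCons_le[of a p] by (simp add: n_def)
  have "ev X (pCons a p) = (\<Sum>i<Suc n. csm (coeff (pCons a p) i) (mpow X i))"
    using ev_bound[OF d] .
  also have "\<dots> = csm a (mat 1) + (\<Sum>i<n. csm (coeff p i) (X ** mpow X i))"
    by (subst sum.lessThan_Suc_shift) simp
  also have "\<dots> = csm a (mat 1) + X ** ev X p"
  proof -
    have dp: "degree p < n" by (simp add: n_def)
    show ?thesis by (simp add: ev_bound[OF dp] mult_sum_right csm_mult_right)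
  qed
  finally show ?thesis .
qed

lemma ev_0[simp]: "ev X 0 = 0"
  by (simp add: ev_def)

lemma ev_const: "ev X [:c:] = csm c (mat 1)"
  using ev_pCons[of X c 0] by simp

lemma ev_x: "ev X [:0,1:] = X"
  using ev_pCons[of X 0 "[:1:]"] ev_const[of X 1] by simp

lemma ev_one: "ev X 1 = mat 1"
  using ev_const[of X 1] by (simp add: one_pCons)

lemma ev_mult: "ev X (p * q) = ev X p ** ev X q"
proof (induction p rule: pCons_induct)
  case 0
  then show ?case by simp
next
  case (pCons a p)
  have "pCons a p * q = smult a q + pCons 0 (p * q)" by simp
  then have "ev X (pCons a p * q) = csm a (ev X q) + X ** ev X (p * q)"
    by (simp add: ev_add ev_smult ev_pCons)
  also have "\<dots> = (csm a (mat 1) + X ** ev X p) ** ev X q"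
    by (simp add: pCons.IH matrix_add_rdistrib csm_mult_left matrix_mul_assoc)
  finally show ?case by (simp add: ev_pCons)
qed

lemma ev_uminus: "ev X (- p) = - ev X p"
  using ev_smult[of X "-1" p] by (simp add: csm_minus1)

lemma ev_diff: "ev X (p - q) = ev X p - ev X q"
  using ev_add[of X p "-q"] ev_uminus[of X q] by simp

lemma ev_sum: "ev X (sum f S) = (\<Sum>x\<in>S. ev X (f x))"
  by (induction S rule: infinite_finite_induct) (simp_all add: ev_add)

lemma ev_monom: "ev X (monom c n) = csm c (mpow X n)"
proof (induction n)
  case 0
  then show ?case by (simp add: monom_0 ev_const)
next
  case (Suc n)
  then show ?case by (simp add: monom_Suc ev_pCons csm_mult_right)
qed

lemma ev_power: "ev X (q ^ n) = mpow (ev X q) n"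
  by (induction n) (simp_all add: ev_one ev_mult)

lemma cadj_mult: "cadj (A ** B) = cadj B ** cadj A"
  by (simp add: cadj_radj radj_mult)

lemma cadj_mpow: "cadj X = X \<Longrightarrow> cadj (mpow X n) = mpow X n"
  by (induction n) (simp_all add: cadj_radj radj_mult radj_one mpow_comm)

lemma poly_map_cnj: "poly (map_poly cnj s) z = cnj (poly s (cnj z))"
  by (induction s rule: pCons_induct) (simp_all add: map_poly_pCons)

lemma ev_cnj:
  assumes "cadj X = X"
  shows "ev X (map_poly cnj p) = cadj (ev X p)"
proof -
  define n where "n = Suc (degree p)"
  have d: "degree (map_poly cnj p) < n" "degree p < n"
    using degree_map_poly[of cnj p] by (simp_all add: n_def)
  have "ev X (map_poly cnj p) = (\<Sum>i<n. csm (cnj (coeff p i)) (mpow X i))"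
    using ev_bound[OF d(1)] by (simp add: coeff_map_poly)
  also have "\<dots> = radj (\<Sum>i<n. csm (coeff p i) (mpow X i))"
    using cadj_mpow[OF assms] by (simp add: cadj_radj radj_sum radj_csm)
  also have "\<dots> = cadj (ev X p)"
    by (simp add: ev_bound[OF d(2)] cadj_radj)
  finally show ?thesis .
qed


lemma csm_of_real: "csm (complex_of_real r) M = r *\<^sub>R M"
  unfolding csm_def by (simp add: vec_eq_iff) (simp add: scaleR_conv_of_real)

lemma annihilator_exists: "\<exists>p. p \<noteq> 0 \<and> ev (X::'n::finite cmat) p = 0"
proof -
  define D where "D = DIM('n cmat)"
  define f where "f i = mpow X i" for i
  show ?thesis
  proof (cases "inj_on f {..D}")
    case False
    then obtain i j where ij: "i \<noteq> j" "f i = f j"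
      unfolding inj_on_def by blast
    define p where "p = monom (1::complex) i - monom 1 j"
    have "coeff p i = 1" using ij by (simp add: p_def coeff_monom)
    then have "p \<noteq> 0" by auto
    moreover have "ev X p = 0" using ij by (simp add: p_def ev_diff ev_monom f_def)
    ultimately show ?thesis by blast
  next
    case True
    define S where "S = f ` {..D}"
    have fin: "finite S" by (simp add: S_def)
    have "card S = Suc D" using True by (simp add: S_def card_image)
    then have "dependent S" using dependent_biggerset[of S] fin by (simp add: D_def)
    then obtain u where u: "\<exists>v\<in>S. u v \<noteq> 0" "(\<Sum>v\<in>S. u v *\<^sub>R v) = 0"
      using real_vector.dependent_finite[OF fin] by blast
    define p where "p = (\<Sum>i\<le>D. monom (complex_of_real (u (f i))) i)"
    have "ev X p = (\<Sum>i\<le>D. u (f i) *\<^sub>R f i)"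
      by (simp add: p_def ev_sum ev_monom f_def csm_of_real)
    also have "\<dots> = (\<Sum>v\<in>S. u v *\<^sub>R v)"
      unfolding S_def by (subst sum.reindex[OF True]) simp
    finally have ev0: "ev X p = 0" using u(2) by simp
    obtain i where i: "i \<le> D" "u (f i) \<noteq> 0" using u(1) by (auto simp: S_def)
    have "coeff p i = (\<Sum>k\<le>D. if k = i then complex_of_real (u (f k)) else 0)"
      by (simp add: p_def coeff_sum coeff_monom eq_commute)
    also have "\<dots> = complex_of_real (u (f i))" using i(1) by (simp add: sum.delta)
    finally have "p \<noteq> 0" using i(2) by auto
    with ev0 show ?thesis by blast
  qed
qed

lemma csm_id_mv: "(csm c (mat 1) + X) *v w = c *s w + X *v w"
proof -
  have "csm c (mat 1) *v w = c *s w"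
    by (auto simp: vec_eq_iff matrix_vector_mult_def csm_def mat_def if_distrib if_distribR sum.delta' cong: if_cong)
  then show ?thesis by (simp add: matrix_vector_mult_add_rdistrib)
qed

lemma cdot_scale: "cdot w (z *s v) = z * cdot w v"
  by (simp add: cdot_def sum_distrib_left ac_simps)

lemma cdot_psd: "cdot w ((radj B ** B) *v w) = complex_of_real (nsq (B *v w))"
proof -
  have "cdot w ((radj B ** B) *v w) = cdot w (radj B *v (B *v w))"
    by (simp add: matrix_vector_mul_assoc)
  also have "\<dots> = cdot (B *v w) (B *v w)" by (simp add: cdot_adj)
  finally show ?thesis by (simp add: cdot_self)
qed

lemma inj_shift:
  fixes B :: "complex^'n::finite^'m::finite" and W :: "'n cmat"
  assumes z: "\<not> (Im z = 0 \<and> Re z \<ge> 0)"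
    and eq: "(csm (-z) (mat 1) + radj B ** B) ** W = 0"
  shows "W = 0"
proof -
  have "W *v u = 0" for u
  proof (rule ccontr)
    define w where "w = W *v u"
    assume "W *v u \<noteq> 0"
    then have wne: "w \<noteq> 0" by (simp add: w_def)
    have "(csm (-z) (mat 1) + radj B ** B) *v w = 0"
      using eq by (simp add: w_def matrix_vector_mul_assoc)
    then have "(radj B ** B) *v w = z *s w"
      by (simp add: csm_id_mv)
    then have "complex_of_real (nsq (B *v w)) = z * complex_of_real (nsq w)"
      using cdot_psd[of w B] by (simp add: cdot_scale cdot_self)
    moreover have pos: "nsq w > 0" using wne nsq_nonneg[of w] nsq_zero[of w] by force
    ultimately have "z = complex_of_real (nsq (B *v w) / nsq w)"
      by (simp add: field_simps)
    then show False using z pos nsq_nonneg[of "B *v w"] by simp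
  qed
  then show ?thesis by (simp add: matrix_eq)
qed

lemma herm_step:
  assumes "cadj Y = Y" and "Y ** (Y ** Z) = 0"
  shows "Y ** Z = 0"
proof -
  have "(Y ** Z) *v u = 0" for u
  proof -
    define w where "w = Z *v u"
    have "Y *v (Y *v w) = 0" using assms(2)
      by (simp add: w_def matrix_vector_mul_assoc)
    then have "cdot (Y *v w) (Y *v w) = 0"
      using cdot_adj[of w Y "Y *v w"] assms(1) by (simp add: cadj_radj cdot_def)
    then show ?thesis using cdot_self_zero by (simp add: w_def matrix_vector_mul_assoc)
  qed
  then show ?thesis by (simp add: matrix_eq)
qed

lemma herm_nilpotent:
  assumes "cadj Y = Y" and "mpow Y (Suc k) = 0"
  shows "Y = 0"
  using assms(2)
proof (induction k)
  case 0
  then show ?case by simp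
next
  case (Suc k)
  then show ?case using herm_step[OF assms(1), of "mpow Y k"] by simp
qed

lemma interpolation:
  fixes g :: "complex \<Rightarrow> complex"
  assumes "finite Z"
  shows "\<exists>s. \<forall>z\<in>Z. poly s z = g z"
  using assms
proof (induction Z rule: finite_induct)
  case empty
  then show ?case by simp
next
  case (insert a Z)
  then obtain s where s: "\<forall>z\<in>Z. poly s z = g z" by blast
  define q where "q = (\<Prod>w\<in>Z. [:-w, 1:])"
  have qz: "poly q z = 0" if "z \<in> Z" for z
    using that insert(1) by (simp add: q_def poly_prod prod_zero_iff)
  have qa: "poly q a \<noteq> 0"
    using insert(1,2) by (simp add: q_def poly_prod prod_zero_iff)
  define s' where "s' = s + smult ((g a - poly s a) / poly q a) q"
  have "\<forall>z\<in>insert a Z. poly s' z = g z"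
    using s qz qa by (auto simp: s'_def)
  then show ?case by blast
qed

lemma ev_in:
  assumes A1: "mat 1 \<in> A" and A0: "0 \<in> A" and Aadd: "\<And>U W. U \<in> A \<Longrightarrow> W \<in> A \<Longrightarrow> U + W \<in> A"
    and Acsm: "\<And>c U. U \<in> A \<Longrightarrow> csm c U \<in> A"
    and Amul: "\<And>U W. U \<in> A \<Longrightarrow> W \<in> A \<Longrightarrow> U ** W \<in> A"
    and XA: "X \<in> A"
  shows "ev X p \<in> A"
proof -
  have pw: "mpow X i \<in> A" for i by (induction i) (simp_all add: A1 Amul XA)
  have "(\<Sum>i\<in>F. csm (coeff p i) (mpow X i)) \<in> A" if "finite F" for F
    using that by (induction F rule: finite_induct) (simp_all add: A0 Aadd Acsm pw)
  then show ?thesis by (simp add: ev_def)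
qed

lemma psd_sqrt:
  fixes B :: "complex^'n::finite^'m::finite" and A :: "'n cmat set"
  assumes A1: "mat 1 \<in> A" and A0: "0 \<in> A" and Aadd: "\<And>U W. U \<in> A \<Longrightarrow> W \<in> A \<Longrightarrow> U + W \<in> A"
    and Acsm: "\<And>c U. U \<in> A \<Longrightarrow> csm c U \<in> A"
    and Amul: "\<And>U W. U \<in> A \<Longrightarrow> W \<in> A \<Longrightarrow> U ** W \<in> A"
    and XA: "X \<in> A" and XB: "X = radj B ** B"
  shows "\<exists>C\<in>A. X = cadj C ** C"
proof -
  have herm: "cadj X = X" by (simp add: XB cadj_radj radj_mult)
  define P where "P d \<longleftrightarrow> (\<exists>p. p \<noteq> 0 \<and> ev X p = 0 \<and> degree p = d)" for d
  have "\<exists>d. P d" using annihilator_exists[of X] by (auto simp: P_def)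
  then have "P (LEAST d. P d)" by (rule LeastI_ex)
  then obtain p where p: "p \<noteq> 0" "ev X p = 0" "degree p = (LEAST d. P d)"
    by (auto simp: P_def)
  have minimal: "degree p \<le> degree q" if "q \<noteq> 0" "ev X q = 0" for q
    using that p(3) Least_le[of P "degree q"] by (auto simp: P_def)
  have deg: "degree p \<noteq> 0"
  proof
    assume "degree p = 0"
    then have "p = [:coeff p 0:]" by (metis degree_0_id)
    then have "csm (coeff p 0) (mat 1) = (0 :: 'n cmat)" using p(2) ev_const by metis
    then have "(csm (coeff p 0) (mat 1) :: 'n cmat) $ undefined $ undefined = 0" by simp
    then have "coeff p 0 = 0" by (simp add: csm_def mat_def)
    then show False using p(1) \<open>p = [:coeff p 0:]\<close> by simp
  qed
  have roots: "Im z = 0 \<and> Re z \<ge> 0" if "poly p z = 0" for z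
  proof (rule ccontr)
    assume nz: "\<not> (Im z = 0 \<and> Re z \<ge> 0)"
    from that obtain r where r: "p = [:-z, 1:] * r" using poly_eq_0_iff_dvd by blast
    have rne: "r \<noteq> 0" using p(1) r by auto
    have "ev X [:-z, 1:] = csm (-z) (mat 1) + X"
      by (simp add: ev_pCons ev_const)
    moreover have "ev X p = ev X [:-z, 1:] ** ev X r" by (simp only: r ev_mult)
    ultimately have "(csm (-z) (mat 1) + radj B ** B) ** ev X r = 0"
      using p(2) by (simp add: XB)
    then have "ev X r = 0" using inj_shift[OF nz] by blast
    then have "degree p \<le> degree r" using minimal rne by blast
    moreover have "degree p = Suc (degree r)"
    proof -
      have "[:-z, 1:] \<noteq> 0" by simp
      then have "degree p = degree [:-z, 1:] + degree r" using r rne degree_mult_eq by blast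
      then show ?thesis by simp
    qed
    ultimately show False by simp
  qed
  have fin: "finite {z. poly p z = 0}" using poly_roots_finite[OF p(1)] .
  obtain s where s: "\<forall>z\<in>{z. poly p z = 0}. poly s z = complex_of_real (sqrt (Re z))"
    using interpolation[OF fin, of "\<lambda>z. complex_of_real (sqrt (Re z))"] by blast
  define f where "f = map_poly cnj s * s - [:0, 1:]"
  have froots: "\<forall>z. poly p z = 0 \<longrightarrow> poly f z = 0"
  proof (intro allI impI)
    fix z assume pz: "poly p z = 0"
    have z: "Im z = 0" "Re z \<ge> 0" using roots[OF pz] by auto
    have cz: "cnj z = z" using z(1) by (simp add: complex_eq_iff)
    have zr: "z = complex_of_real (Re z)" using z(1) by (simp add: complex_eq_iff)
    have "poly f z = cnj (poly s z) * poly s z - z"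
      by (simp add: f_def poly_map_cnj cz)
    also have "\<dots> = complex_of_real (Re z) - z"
    proof -
      have ps: "poly s z = complex_of_real (sqrt (Re z))" using s pz by simp
      show ?thesis unfolding ps using z(2) by (simp flip: of_real_mult)
    qed
    also have "\<dots> = 0" using zr by simp
    finally show "poly f z = 0" .
  qed
  have "p dvd f ^ degree p"
    using nullstellensatz_lemma[OF froots refl deg] .
  then obtain k where k: "f ^ degree p = p * k" by (rule dvdE)
  define Y where "Y = ev X f"
  have "mpow Y (degree p) = 0"
    using k p(2) by (metis Y_def ev_mult ev_power times0_left)
  moreover obtain k' where "degree p = Suc k'" using deg not0_implies_Suc by blast
  moreover have Yeq: "Y = cadj (ev X s) ** ev X s - X"
    by (simp add: Y_def f_def ev_diff ev_mult ev_cnj[OF herm] ev_x)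
  moreover have "cadj Y = Y"
    using Yeq herm by (simp add: cadj_radj radj_diff radj_mult)
  ultimately have "Y = 0" using herm_nilpotent by metis
  then have "X = cadj (ev X s) ** ev X s" using Yeq by simp
  moreover have "ev X s \<in> A" by (rule ev_in[OF A1 A0 Aadd Acsm Amul XA])
  ultimately show ?thesis by blast
qed


lemma sum_pair: "(\<Sum>x\<in>(UNIV::('a::finite \<times> 'b::finite) set). f x) = (\<Sum>a\<in>UNIV. \<Sum>b\<in>UNIV. f (a, b))"
proof -
  have "(\<Sum>x\<in>(UNIV::'a set) \<times> (UNIV::'b set). f x) = (\<Sum>a\<in>UNIV. \<Sum>b\<in>UNIV. f (a, b))"
    by (rule sum.cartesian_product')
  then show ?thesis by (simp only: UNIV_Times_UNIV)
qed
lemma lin_span_zero: "0 \<in> lin_span G"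
  unfolding lin_span_def by (rule CollectI, rule exI[of _ "{}"]) simp

lemma lin_span_base: "A \<in> G \<Longrightarrow> A \<in> lin_span G"
  unfolding lin_span_def by (rule CollectI, rule exI[of _ "{A}"], rule exI[of _ "\<lambda>_. 1"]) (simp add: csm_def)
lemma lin_span_csm: "Y \<in> lin_span G \<Longrightarrow> csm d Y \<in> lin_span G"
proof -
  assume "Y \<in> lin_span G"
  then obtain F c where Fc: "finite F" "F \<subseteq> G" "Y = (\<Sum>A\<in>F. csm (c A) A)"
    by (auto simp: lin_span_def)
  then have "csm d Y = (\<Sum>A\<in>F. csm (d * c A) A)" by (simp add: csm_sum csm_csm)
  then show ?thesis unfolding lin_span_def
    by (intro CollectI exI[of _ F] exI[of _ "\<lambda>A. d * c A"]) (use Fc in simp)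
qed

lemma lin_span_add: "Y1 \<in> lin_span G \<Longrightarrow> Y2 \<in> lin_span G \<Longrightarrow> Y1 + Y2 \<in> lin_span G"
proof -
  assume "Y1 \<in> lin_span G" "Y2 \<in> lin_span G"
  then obtain F1 c1 F2 c2 where F: "finite F1" "F1 \<subseteq> G" "Y1 = (\<Sum>A\<in>F1. csm (c1 A) A)"
      "finite F2" "F2 \<subseteq> G" "Y2 = (\<Sum>A\<in>F2. csm (c2 A) A)"
    by (auto simp: lin_span_def)
  define c where "c A = (if A \<in> F1 then c1 A else 0) + (if A \<in> F2 then c2 A else 0)" for A
  have fin: "finite (F1 \<union> F2)" using F by simp
  have e1: "(\<Sum>A\<in>F1 \<union> F2. csm (if A \<in> F1 then c1 A else 0) A) = Y1"
  proof -
    have "(\<Sum>A\<in>F1 \<union> F2. csm (if A \<in> F1 then c1 A else 0) A)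
        = (\<Sum>A\<in>F1 \<union> F2. if A \<in> F1 then csm (c1 A) A else 0)"
      by (rule sum.cong) auto
    also have "\<dots> = (\<Sum>A\<in>(F1 \<union> F2) \<inter> F1. csm (c1 A) A)"
      by (rule sum.inter_restrict[OF fin, symmetric])
    also have "(F1 \<union> F2) \<inter> F1 = F1" by auto
    finally show ?thesis using F by simp
  qed
  have e2: "(\<Sum>A\<in>F1 \<union> F2. csm (if A \<in> F2 then c2 A else 0) A) = Y2"
  proof -
    have "(\<Sum>A\<in>F1 \<union> F2. csm (if A \<in> F2 then c2 A else 0) A)
        = (\<Sum>A\<in>F1 \<union> F2. if A \<in> F2 then csm (c2 A) A else 0)"
      by (rule sum.cong) auto
    also have "\<dots> = (\<Sum>A\<in>(F1 \<union> F2) \<inter> F2. csm (c2 A) A)"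
      by (rule sum.inter_restrict[OF fin, symmetric])
    also have "(F1 \<union> F2) \<inter> F2 = F2" by auto
    finally show ?thesis using F by simp
  qed
  have "Y1 + Y2 = (\<Sum>A\<in>F1 \<union> F2. csm (c A) A)"
    unfolding c_def csm_add_left sum.distrib e1 e2 ..
  moreover have "F1 \<union> F2 \<subseteq> G" using F by blast
  ultimately show ?thesis unfolding lin_span_def
    by (intro CollectI exI[of _ "F1 \<union> F2"] exI[of _ c]) (use fin in simp)
qed


lemma lin_span_sum: "(\<And>x. x \<in> S \<Longrightarrow> f x \<in> lin_span G) \<Longrightarrow> sum f S \<in> lin_span G"
proof (induction S rule: infinite_finite_induct)
  case (infinite A)
  then show ?case by (simp add: lin_span_zero)
next
  case empty
  then show ?case by (simp add: lin_span_zero)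
next
  case (insert x F)
  then show ?case by (simp add: lin_span_add)
qed

lemma lin_span_mult:
  assumes G: "\<And>A B. A \<in> G \<Longrightarrow> B \<in> G \<Longrightarrow> A ** B \<in> lin_span G"
    and Y1: "Y1 \<in> lin_span G" and Y2: "Y2 \<in> lin_span G"
  shows "Y1 ** Y2 \<in> lin_span G"
proof -
  obtain F1 c1 where F1: "finite F1" "F1 \<subseteq> G" "Y1 = (\<Sum>A\<in>F1. csm (c1 A) A)"
    using Y1 by (auto simp: lin_span_def)
  obtain F2 c2 where F2: "finite F2" "F2 \<subseteq> G" "Y2 = (\<Sum>A\<in>F2. csm (c2 A) A)"
    using Y2 by (auto simp: lin_span_def)
  have "Y1 ** Y2 = (\<Sum>B\<in>F2. csm (c2 B) (\<Sum>A\<in>F1. csm (c1 A) (A ** B)))"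
    by (simp add: F1(3) F2(3) mult_sum_left mult_sum_right csm_mult_left csm_mult_right)
  also have "\<dots> \<in> lin_span G"
  proof (rule lin_span_sum, rule lin_span_csm, rule lin_span_sum, rule lin_span_csm)
    fix A B assume "B \<in> F2" "A \<in> F1"
    then show "A ** B \<in> lin_span G" using F1(2) F2(2) G by blast
  qed
  finally show ?thesis .
qed

definition Tm :: "('h::finite \<times> 'h \<times> 'k::finite \<times> 'k) cmat \<Rightarrow> ('h \<times> 'h) cmat" where
  "Tm P = idid_trace (idid_mult P)"

lemma Tm_entry: "Tm P $ (i, j) $ (p, q) = (\<Sum>\<alpha>\<in>UNIV. \<Sum>\<gamma>\<in>UNIV. P $ (i, j, \<alpha>, \<alpha>) $ (p, q, \<gamma>, \<gamma>))"
  by (simp add: Tm_def idid_trace_def idid_mult_def)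

lemma Tm_add: "Tm (A + B) = Tm A + Tm B"
  by (simp add: vec_eq_iff Tm_entry split_paired_all sum.distrib)

lemma Tm_csm: "Tm (csm c A) = csm c (Tm A)"
  by (simp add: vec_eq_iff Tm_entry split_paired_all sum_distrib_left csm_def)

lemma Tm_zero: "Tm 0 = 0"
  by (simp add: vec_eq_iff Tm_entry split_paired_all)

lemma Tm_sum: "Tm (sum f S) = (\<Sum>x\<in>S. Tm (f x))"
  by (induction S rule: infinite_finite_induct) (simp_all add: Tm_add Tm_zero)


lemma Tm_el4: "Tm (el4 a b c d) = csm (ctrace (c ** d)) (el2 a b)"
proof -
  have "Tm (el4 a b c d) $ (i, j) $ (p, q) = csm (ctrace (c ** d)) (el2 a b) $ (i, j) $ (p, q)" for i j p q
  proof -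
    have "Tm (el4 a b c d) $ (i, j) $ (p, q) = (\<Sum>\<alpha>\<in>UNIV. \<Sum>\<gamma>\<in>UNIV. (a $ i $ p * b $ q $ j) * (c $ \<alpha> $ \<gamma> * d $ \<gamma> $ \<alpha>))"
      by (simp add: Tm_entry el4_def mult.assoc)
    also have "\<dots> = (a $ i $ p * b $ q $ j) * ctrace (c ** d)"
      by (simp only: sum_distrib_left ctrace_def matrix_matrix_mult_def vec_lambda_beta)
    also have "\<dots> = csm (ctrace (c ** d)) (el2 a b) $ (i, j) $ (p, q)"
      by (simp add: csm_def el2_def)
    finally show ?thesis .
  qed
  then show ?thesis by (simp add: vec_eq_iff split_paired_all)
qed

lemma el2_mult: "el2 a b ** el2 a' b' = el2 (a ** a') (b' ** b)"
proof -
  have "(el2 a b ** el2 a' b') $ (i, j) $ (p, q) = el2 (a ** a') (b' ** b) $ (i, j) $ (p, q)" for i j p q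
  proof -
    have "(el2 a b ** el2 a' b') $ (i, j) $ (p, q)
        = (\<Sum>r\<in>UNIV. \<Sum>s\<in>UNIV. (a $ i $ r * b $ s $ j) * (a' $ r $ p * b' $ q $ s))"
      by (simp add: matrix_matrix_mult_def el2_def sum_pair)
    also have "\<dots> = (\<Sum>r\<in>UNIV. \<Sum>s\<in>UNIV. (a $ i $ r * a' $ r $ p) * (b' $ q $ s * b $ s $ j))"
      by (intro sum.cong refl) (simp add: mult_ac)
    also have "\<dots> = el2 (a ** a') (b' ** b) $ (i, j) $ (p, q)"
      by (simp add: el2_def matrix_matrix_mult_def sum_product)
    finally show ?thesis .
  qed
  then show ?thesis by (simp add: vec_eq_iff split_paired_all)
qed

lemma el2_one: "el2 (mat 1) (mat 1) = (mat 1 :: ('h::finite \<times> 'h) cmat)"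
  by (auto simp: vec_eq_iff split_paired_all el2_def mat_def)


lemma el2_in_MMop: "a \<in> M \<Longrightarrow> b \<in> M \<Longrightarrow> el2 a b \<in> MMop M"
  unfolding MMop_def by (rule lin_span_base, rule CollectI, rule exI[of _ a], rule exI[of _ b]) simp

lemma Tm_in_MMop:
  assumes "P \<in> MMopNNop M N"
  shows "Tm P \<in> MMop M"
proof -
  obtain F c where F: "finite F" "F \<subseteq> {el4 a b c d | a b c d. a \<in> M \<and> b \<in> M \<and> c \<in> N \<and> d \<in> N}"
      "P = (\<Sum>A\<in>F. csm (c A) A)"
    using assms by (auto simp: MMopNNop_def lin_span_def)
  have h: "Tm A \<in> MMop M" if A: "A \<in> F" for A
  proof -
    obtain a b c' d where "A = el4 a b c' d" "a \<in> M" "b \<in> M" using F(2) A by force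
    then show ?thesis
      using el2_in_MMop[of a M b] lin_span_csm[of "el2 a b"] by (simp add: Tm_el4 MMop_def)
  qed
  have "(\<Sum>A\<in>F. csm (c A) (Tm A)) \<in> lin_span {el2 a b |a b. a \<in> M \<and> b \<in> M}"
    using h unfolding MMop_def by (intro lin_span_sum lin_span_csm) simp
  then show ?thesis by (simp add: F(3) Tm_sum Tm_csm MMop_def)
qed

lemma MMop_closed:
  assumes "vN_algebra M"
  shows "mat 1 \<in> MMop M" "0 \<in> MMop M"
    "\<And>U W. U \<in> MMop M \<Longrightarrow> W \<in> MMop M \<Longrightarrow> U + W \<in> MMop M"
    "\<And>c U. U \<in> MMop M \<Longrightarrow> csm c U \<in> MMop M"
    "\<And>U W. U \<in> MMop M \<Longrightarrow> W \<in> MMop M \<Longrightarrow> U ** W \<in> MMop M"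
proof -
  have M: "mat 1 \<in> M" "\<And>A B. A \<in> M \<Longrightarrow> B \<in> M \<Longrightarrow> A ** B \<in> M"
    using assms by (auto simp: vN_algebra_def)
  show "mat 1 \<in> MMop M"
    using el2_in_MMop[OF M(1) M(1)] by (simp add: el2_one)
  show "0 \<in> MMop M" unfolding MMop_def by (rule lin_span_zero)
  show "\<And>U W. U \<in> MMop M \<Longrightarrow> W \<in> MMop M \<Longrightarrow> U + W \<in> MMop M"
    unfolding MMop_def by (rule lin_span_add)
  show "\<And>c U. U \<in> MMop M \<Longrightarrow> csm c U \<in> MMop M"
    unfolding MMop_def by (rule lin_span_csm)
  show "\<And>U W. U \<in> MMop M \<Longrightarrow> W \<in> MMop M \<Longrightarrow> U ** W \<in> MMop M"
    unfolding MMop_def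
  proof (rule lin_span_mult)
    fix A B assume A: "A \<in> {el2 a b |a b. a \<in> M \<and> b \<in> M}" and B: "B \<in> {el2 a b |a b. a \<in> M \<and> b \<in> M}"
    obtain a b where ab: "A = el2 a b" "a \<in> M" "b \<in> M" using A by blast
    obtain a' b' where ab': "B = el2 a' b'" "a' \<in> M" "b' \<in> M" using B by blast
    have "A ** B = el2 (a ** a') (b' ** b)" by (simp add: ab ab' el2_mult)
    moreover have "el2 (a ** a') (b' ** b) \<in> MMop M"
      by (rule el2_in_MMop) (simp_all add: M ab ab')
    ultimately show "A ** B \<in> lin_span {el2 a b |a b. a \<in> M \<and> b \<in> M}"
      by (simp add: MMop_def)
  qed
qed


definition Jm :: "complex^('h::finite \<times> 'h)^('h \<times> 'h \<times> 'k::finite \<times> 'k)" where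
  "Jm = (\<chi> x y. if fst x = fst y \<and> fst (snd x) = snd y \<and> fst (snd (snd x)) = snd (snd (snd x)) then 1 else 0)"

lemma J_sum:
  "(\<Sum>x\<in>(UNIV::('h::finite \<times> 'h \<times> 'k::finite \<times> 'k) set).
      (if fst x = i \<and> fst (snd x) = j \<and> fst (snd (snd x)) = snd (snd (snd x)) then g x else 0))
   = (\<Sum>\<alpha>\<in>UNIV. g (i, j, \<alpha>, \<alpha>))"
proof -
  define C where "C x \<longleftrightarrow> fst x = i \<and> fst (snd x) = j \<and> fst (snd (snd x)) = snd (snd (snd x))"
    for x :: "'h \<times> 'h \<times> 'k \<times> 'k"
  define h where "h \<alpha> = (i, j, \<alpha>, \<alpha>)" for \<alpha> :: 'k
  have "(\<Sum>x\<in>UNIV. if C x then g x else 0) = (\<Sum>x\<in>{x \<in> UNIV. C x}. g x)"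
    by (rule sum.inter_filter[symmetric]) simp
  also have "{x \<in> UNIV. C x} = range h"
    by (auto simp: C_def h_def image_def)
  also have "(\<Sum>x\<in>range h. g x) = (\<Sum>\<alpha>\<in>UNIV. g (h \<alpha>))"
    by (subst sum.reindex) (auto simp: inj_on_def h_def)
  finally show ?thesis by (simp add: C_def h_def)
qed

lemma Tm_J: "Tm P = radj Jm ** P ** Jm"
proof -
  have "Tm P $ (i, j) $ (p, q) = (radj Jm ** P ** Jm) $ (i, j) $ (p, q)" for i j p q
  proof -
    have inner: "(\<Sum>x\<in>UNIV. cnj (Jm $ x $ (i, j)) * P $ x $ y) = (\<Sum>\<alpha>\<in>UNIV. P $ (i, j, \<alpha>, \<alpha>) $ y)" for y
    proof -
      have "(\<Sum>x\<in>UNIV. cnj (Jm $ x $ (i, j)) * P $ x $ y)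
          = (\<Sum>x\<in>UNIV. if fst x = i \<and> fst (snd x) = j \<and> fst (snd (snd x)) = snd (snd (snd x)) then P $ x $ y else 0)"
        by (intro sum.cong refl) (simp add: Jm_def)
      then show ?thesis by (simp add: J_sum)
    qed
    have rj: "(radj Jm ** P) $ (i, j) $ y = (\<Sum>x\<in>UNIV. cnj (Jm $ x $ (i, j)) * P $ x $ y)" for y
      by (simp only: matrix_matrix_mult_def vec_lambda_beta radj_def)
    have "(radj Jm ** P ** Jm) $ (i, j) $ (p, q) = (\<Sum>y\<in>UNIV. ((radj Jm ** P) $ (i, j) $ y) * Jm $ y $ (p, q))"
      by (simp only: matrix_matrix_mult_def vec_lambda_beta)
    also have "\<dots> = (\<Sum>y\<in>UNIV. (\<Sum>\<alpha>\<in>UNIV. P $ (i, j, \<alpha>, \<alpha>) $ y) * Jm $ y $ (p, q))"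
      by (simp only: rj inner)
    also have "\<dots> = (\<Sum>y\<in>UNIV. if fst y = p \<and> fst (snd y) = q \<and> fst (snd (snd y)) = snd (snd (snd y))
                then (\<Sum>\<alpha>\<in>UNIV. P $ (i, j, \<alpha>, \<alpha>) $ y) else 0)"
      by (intro sum.cong refl) (simp add: Jm_def)
    also have "\<dots> = (\<Sum>\<gamma>\<in>UNIV. \<Sum>\<alpha>\<in>UNIV. P $ (i, j, \<alpha>, \<alpha>) $ (p, q, \<gamma>, \<gamma>))"
      by (rule J_sum)
    also have "\<dots> = (\<Sum>\<alpha>\<in>UNIV. \<Sum>\<gamma>\<in>UNIV. P $ (i, j, \<alpha>, \<alpha>) $ (p, q, \<gamma>, \<gamma>))"
      by (rule sum.swap)
    also have "\<dots> = Tm P $ (i, j) $ (p, q)"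
      by (simp only: Tm_entry)
    finally show ?thesis by simp
  qed
  then show ?thesis by (simp add: vec_eq_iff split_paired_all)
qed

lemma Tm_psd:
  assumes "P ** P = P" and "cadj P = P"
  shows "Tm P = radj (P ** Jm) ** (P ** Jm)"
proof -
  have "P = radj P ** P" using assms by (simp add: cadj_radj)
  then have "Tm P = radj Jm ** (radj P ** P) ** Jm" using Tm_J[of P] by simp
  then show ?thesis by (simp add: radj_mult matrix_mul_assoc)
qed


lemma re_hs: "Re (hs_inner A B) = A \<bullet> B"
proof -
  have "Re (hs_inner A B) = (\<Sum>i\<in>UNIV. \<Sum>k\<in>UNIV. A $ k $ i \<bullet> B $ k $ i)"
    by (simp add: hs_inner_def ctrace_def cadj_def matrix_matrix_mult_def Re_sum inner_complex_def)
  also have "\<dots> = (\<Sum>k\<in>UNIV. \<Sum>i\<in>UNIV. A $ k $ i \<bullet> B $ k $ i)"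
    by (rule sum.swap)
  also have "\<dots> = A \<bullet> B" by (simp add: inner_vec_def)
  finally show ?thesis .
qed

lemma inner_if: "(a * (if c then 1 else 0)) \<bullet> (z::complex) = (if c then a \<bullet> z else 0)"
  by simp

lemma E_adj: "kron X (mat 1 :: 'k::finite cmat) \<bullet> Z = X \<bullet> ptrace_K (Z :: ('h::finite \<times> 'k) cmat)"
proof -
  have "kron X (mat 1 :: 'k cmat) \<bullet> Z
      = (\<Sum>i\<in>UNIV. \<Sum>\<alpha>\<in>UNIV. \<Sum>j\<in>UNIV. \<Sum>\<beta>\<in>UNIV. (X $ i $ j * (mat 1 :: 'k cmat) $ \<alpha> $ \<beta>) \<bullet> Z $ (i, \<alpha>) $ (j, \<beta>))"
    by (simp add: inner_vec_def sum_pair kron_def)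
  also have "\<dots> = (\<Sum>i\<in>UNIV. \<Sum>\<alpha>\<in>UNIV. \<Sum>j\<in>UNIV. X $ i $ j \<bullet> Z $ (i, \<alpha>) $ (j, \<alpha>))"
    by (simp add: mat_def inner_if)
  also have "\<dots> = (\<Sum>i\<in>UNIV. \<Sum>j\<in>UNIV. \<Sum>\<alpha>\<in>UNIV. X $ i $ j \<bullet> Z $ (i, \<alpha>) $ (j, \<alpha>))"
    by (intro sum.cong refl) (rule sum.swap)
  also have "\<dots> = X \<bullet> ptrace_K Z"
    by (simp add: inner_vec_def ptrace_K_def inner_sum_right)
  finally show ?thesis .
qed

lemma swap3: "(\<Sum>a\<in>A. \<Sum>b\<in>B. \<Sum>c\<in>C. h a b c) = (\<Sum>b\<in>B. \<Sum>c\<in>C. \<Sum>a\<in>A. h a b c)"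
proof -
  have "(\<Sum>a\<in>A. \<Sum>b\<in>B. \<Sum>c\<in>C. h a b c) = (\<Sum>b\<in>B. \<Sum>a\<in>A. \<Sum>c\<in>C. h a b c)"
    by (rule sum.swap)
  also have "\<dots> = (\<Sum>b\<in>B. \<Sum>c\<in>C. \<Sum>a\<in>A. h a b c)"
    by (intro sum.cong refl) (rule sum.swap)
  finally show ?thesis .
qed

lemma weaver_factor:
  "weaver2 (Tm P) X = ptrace_K (weaver4 P (kron X (mat 1)))"
proof -
  have "weaver2 (Tm P) X $ i $ j = ptrace_K (weaver4 P (kron X (mat 1))) $ i $ j" for i j
  proof -
    have "ptrace_K (weaver4 P (kron X (mat 1))) $ i $ j
        = (\<Sum>\<alpha>\<in>UNIV. \<Sum>p\<in>UNIV. \<Sum>q\<in>UNIV. \<Sum>\<gamma>\<in>UNIV. \<Sum>\<delta>\<in>UNIV.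
             P $ (i, j, \<alpha>, \<alpha>) $ (p, q, \<gamma>, \<delta>) * (X $ p $ q * (if \<gamma> = \<delta> then 1 else 0)))"
      by (simp add: ptrace_K_def weaver4_def kron_def mat_def)
    also have "\<dots> = (\<Sum>\<alpha>\<in>UNIV. \<Sum>p\<in>UNIV. \<Sum>q\<in>UNIV. \<Sum>\<gamma>\<in>UNIV.
             P $ (i, j, \<alpha>, \<alpha>) $ (p, q, \<gamma>, \<gamma>) * X $ p $ q)"
      by (simp add: if_distrib if_distribR cong: if_cong)
    also have "\<dots> = (\<Sum>p\<in>UNIV. \<Sum>q\<in>UNIV. \<Sum>\<alpha>\<in>UNIV. \<Sum>\<gamma>\<in>UNIV.
             P $ (i, j, \<alpha>, \<alpha>) $ (p, q, \<gamma>, \<gamma>) * X $ p $ q)"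
      by (rule swap3)
    also have "\<dots> = weaver2 (Tm P) X $ i $ j"
      by (simp add: weaver2_def Tm_entry sum_distrib_right)
    finally show ?thesis by simp
  qed
  then show ?thesis by (simp add: vec_eq_iff)
qed

lemma weaver2_linear:
  fixes S :: "('h::finite \<times> 'h) cmat"
  shows "linear (weaver2 S)"
proof (rule linearI)
  fix A B :: "'h cmat"
  show "weaver2 S (A + B) = weaver2 S A + weaver2 S B"
    by (simp add: vec_eq_iff weaver2_def distrib_left sum.distrib)
next
  fix r :: real and A :: "'h cmat"
  show "weaver2 S (r *\<^sub>R A) = r *\<^sub>R weaver2 S A"
    by (simp add: vec_eq_iff weaver2_def scaleR_sum_right)
qed


theorem proposition4p9:
  fixes M :: "'h::finite cmat set" and N :: "'k::finite cmat set"
    and V :: "('h \<times> 'k) cmat set" and P :: "('h \<times> 'h \<times> 'k \<times> 'k) cmat"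
  assumes "vN_algebra M" and "vN_algebra N" and "minimally_represented N"
    and "quantum_multigraph M N V"
    and "multi_edge_indicator M N V P"
  shows "positive_in (MMop M) (idid_trace (idid_mult P))
    \<and> range (weaver2 (idid_trace (idid_mult P))) = ptrace_K ` V"
proof -
  have Pm: "P \<in> MMopNNop M N" and PP: "P ** P = P" and Pa: "cadj P = P"
    and proj1: "\<And>S. weaver4 P S \<in> V"
    and proj2: "\<And>S T. T \<in> V \<Longrightarrow> hs_inner T (S - weaver4 P S) = 0"
    using assms(5) unfolding multi_edge_indicator_def by auto
  have csV: "csubspace V" using assms(4) by (simp add: quantum_multigraph_def)
  have S_eq: "idid_trace (idid_mult P) = Tm P" by (simp add: Tm_def)
  have TmM: "Tm P \<in> MMop M" by (rule Tm_in_MMop[OF Pm])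
  have "\<exists>C\<in>MMop M. Tm P = cadj C ** C"
    by (rule psd_sqrt[OF MMop_closed[OF assms(1)] TmM Tm_psd[OF PP Pa]])
  then have pos: "positive_in (MMop M) (Tm P)" by (simp add: positive_in_def TmM)

  define Q where "Q = weaver4 P"
  define L where "L = weaver2 (Tm P)"
  have QV: "Q S \<in> V" for S using proj1 by (simp add: Q_def)
  have orth: "T \<bullet> (S - Q S) = 0" if "T \<in> V" for S T
    using proj2[OF that, of S] re_hs[of T "S - Q S"] by (simp add: Q_def)
  have Vdiff: "T - U \<in> V" if "T \<in> V" "U \<in> V" for T U
  proof -
    have "csm (-1) U \<in> V" using csV that(2) by (simp add: csubspace_def)
    then have "T + csm (-1) U \<in> V" using csV that(1) by (simp add: csubspace_def)
    then show ?thesis by (simp add: csm_minus1)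
  qed
  have fixV: "Q T = T" if "T \<in> V" for T
  proof -
    have "(T - Q T) \<bullet> (T - Q T) = T \<bullet> (T - Q T) - Q T \<bullet> (T - Q T)"
      by (simp add: inner_diff_left)
    also have "\<dots> = 0" using orth[OF that, of T] orth[OF QV[of T], of T] by simp
    finally show ?thesis by simp
  qed
  have sa: "Q S \<bullet> T = S \<bullet> Q T" for S T
  proof -
    have "Q S \<bullet> T = Q S \<bullet> Q T" using orth[OF QV[of S], of T] by (simp add: inner_diff_right)
    moreover have "S \<bullet> Q T = Q T \<bullet> Q S" using orth[OF QV[of T], of S]
      by (simp add: inner_diff_right inner_commute)
    ultimately show ?thesis by (simp add: inner_commute)
  qed
  have Lfac: "L X = ptrace_K (Q (kron X (mat 1)))" for X
    by (simp add: L_def Q_def weaver_factor)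
  have Lsa: "a \<bullet> L b = L a \<bullet> b" for a b
  proof -
    have "a \<bullet> L b = kron a (mat 1) \<bullet> Q (kron b (mat 1))" by (simp add: Lfac E_adj)
    also have "\<dots> = Q (kron a (mat 1)) \<bullet> kron b (mat 1)" by (simp add: sa)
    also have "\<dots> = b \<bullet> L a" by (simp add: Lfac E_adj inner_commute)
    finally show ?thesis by (simp add: inner_commute)
  qed
  have range_eq: "range L = ptrace_K ` V"
  proof
    show "range L \<subseteq> ptrace_K ` V" using Lfac QV by auto
  next
    show "ptrace_K ` V \<subseteq> range L"
    proof
      fix y assume "y \<in> ptrace_K ` V"
      then obtain T where T: "T \<in> V" "y = ptrace_K T" by blast
      have spanL: "span (range L) = range L"
        using linear_subspace_image[OF weaver2_linear subspace_UNIV] by (simp add: L_def span_eq_iff)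
      obtain w z where wz: "w \<in> span (range L)" "\<And>u. u \<in> span (range L) \<Longrightarrow> orthogonal z u" "y = w + z"
        using orthogonal_subspace_decomp_exists[of "range L" y] by metis
      have zL: "z \<bullet> L v = 0" for v using wz(2)[of "L v"] spanL by (simp add: orthogonal_def)
      have "L z \<bullet> L z = 0" using Lsa[of z "L z"] zL[of "L z"] by simp
      then have Lz: "L z = 0" by simp
      have "Q (kron z (mat 1)) \<bullet> Q (kron z (mat 1)) = kron z (mat 1) \<bullet> Q (kron z (mat 1))"
        using sa[of "kron z (mat 1)" "Q (kron z (mat 1))"] fixV[OF QV] by simp
      also have "\<dots> = z \<bullet> L z" by (simp add: Lfac E_adj)
      finally have "Q (kron z (mat 1)) = 0" using Lz by simp
      then have zy: "z \<bullet> y = 0"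
        using T sa[of "kron z (mat 1)" T] fixV[OF T(1)] E_adj[of z T] by simp
      obtain x where wx: "w = L x" using wz(1) spanL by auto
      have "z \<bullet> z = z \<bullet> y - z \<bullet> w" using wz(3) by (simp add: inner_diff_right inner_add_right)
      then have "z \<bullet> z = 0" using zy zL[of x] wx by simp
      then have "z = 0" by simp
      then show "y \<in> range L" using wz(3) wx by simp
    qed
  qed
  show ?thesis using pos range_eq by (simp add: S_eq L_def)
qed


end
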